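(* Let $T$ be a non-star tree containing a vertex $x$ with $d(x)\ge 3$. Suppose that for every neighbor $y$ of $x$, the tree $T_{(y,x)}$ is isomorphic to $P_1$ or to $P_2$, and that at most one of these trees is isomorphic to $P_1$. Then there exists a $(T,x)$-well 2-placement.
   Context: All graphs are finite, simple and undirected; $P_k$ is the path on $k$ vertices. A non-star tree is a tree not isomorphic to a star $K_{1,m}$ for any $m\ge0$. For an edge $ab$ of a tree $T$, $T_{(a,b)}$ denotes the connected component containing $a$ in $T-\{ab\}$. A permutation $\sigma$ of $V(T)$ is a 2-placement of $T$ if $\sigma(a)\sigma(b)\notin E(T)$ for every edge $ab\in E(T)$; $\sigma(T)\subseteq T^k$ means $dist_T(\sigma(a),\sigma(b))\le k$ for every edge $ab$ of $T$. A fixed-point-free permutation $\sigma$ of $V(T)$ is a $(T,x)$-well 2-placement if (distances and degrees in $T$): (1) $\sigma$ is a 2-placement of $T$; (2) $\sigma(T)\subseteq T^6$; (3) $dist(x,\sigma(x))\le 2$; (4) $dist(w,\sigma(w))\le 3$ for every neighbor $w$ of $x$; (5) $dist(w,\sigma(w))\le 4$ for every $w$ of degree $1$; (6) every cycle of $\sigma$ (in its disjoint cycle decomposition) has length at most $5$. *)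

theory Defs
  imports Main
begin

definition graph :: "'a set \<Rightarrow> ('a \<Rightarrow> 'a \<Rightarrow> bool) \<Rightarrow> bool" where
  "graph V E \<longleftrightarrow> finite V \<and> (\<forall>u v. E u v \<longrightarrow> u \<in> V \<and> v \<in> V \<and> u \<noteq> v \<and> E v u)"

definition connected_graph :: "'a set \<Rightarrow> ('a \<Rightarrow> 'a \<Rightarrow> bool) \<Rightarrow> bool" where
  "connected_graph V E \<longleftrightarrow> (\<forall>u\<in>V. \<forall>v\<in>V. E\<^sup>*\<^sup>* u v)"

definition acyclic_graph :: "('a \<Rightarrow> 'a \<Rightarrow> bool) \<Rightarrow> bool" where
  "acyclic_graph E \<longleftrightarrow> \<not> (\<exists>xs. length xs \<ge> 3 \<and> distinct xs \<and> successively E xs \<and> E (last xs) (hd xs))"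

definition tree :: "'a set \<Rightarrow> ('a \<Rightarrow> 'a \<Rightarrow> bool) \<Rightarrow> bool" where
  "tree V E \<longleftrightarrow> graph V E \<and> V \<noteq> {} \<and> connected_graph V E \<and> acyclic_graph E"

definition degree :: "'a set \<Rightarrow> ('a \<Rightarrow> 'a \<Rightarrow> bool) \<Rightarrow> 'a \<Rightarrow> nat" where
  "degree V E x = card {w \<in> V. E x w}"

definition dist :: "('a \<Rightarrow> 'a \<Rightarrow> bool) \<Rightarrow> 'a \<Rightarrow> 'a \<Rightarrow> nat" where
  "dist E u v = (LEAST n. (E ^^ n) u v)"

definition graph_iso :: "'a set \<Rightarrow> ('a \<Rightarrow> 'a \<Rightarrow> bool) \<Rightarrow> 'b set \<Rightarrow> ('b \<Rightarrow> 'b \<Rightarrow> bool) \<Rightarrow> bool" where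
  "graph_iso V1 E1 V2 E2 \<longleftrightarrow>
     (\<exists>f. bij_betw f V1 V2 \<and> (\<forall>u\<in>V1. \<forall>v\<in>V1. E1 u v \<longleftrightarrow> E2 (f u) (f v)))"

definition star_V :: "nat \<Rightarrow> nat set" where "star_V m = {0..m}"
definition star_E :: "nat \<Rightarrow> nat \<Rightarrow> nat \<Rightarrow> bool" where
  "star_E m i j \<longleftrightarrow> i \<le> m \<and> j \<le> m \<and> ((i = 0 \<and> j \<noteq> 0) \<or> (j = 0 \<and> i \<noteq> 0))"

definition path_V :: "nat \<Rightarrow> nat set" where "path_V k = {0..<k}"
definition path_E :: "nat \<Rightarrow> nat \<Rightarrow> nat \<Rightarrow> bool" where
  "path_E k i j \<longleftrightarrow> i < k \<and> j < k \<and> (i = j + 1 \<or> j = i + 1)"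

definition non_star_tree :: "'a set \<Rightarrow> ('a \<Rightarrow> 'a \<Rightarrow> bool) \<Rightarrow> bool" where
  "non_star_tree V E \<longleftrightarrow> tree V E \<and> \<not> (\<exists>m. graph_iso V E (star_V m) (star_E m))"

definition del_edge :: "('a \<Rightarrow> 'a \<Rightarrow> bool) \<Rightarrow> 'a \<Rightarrow> 'a \<Rightarrow> 'a \<Rightarrow> 'a \<Rightarrow> bool" where
  "del_edge E a b u v \<longleftrightarrow> E u v \<and> \<not> ((u = a \<and> v = b) \<or> (u = b \<and> v = a))"

text \<open>Vertex set of T_(a,b): component of a in T - {ab}.\<close>
definition branch_V :: "'a set \<Rightarrow> ('a \<Rightarrow> 'a \<Rightarrow> bool) \<Rightarrow> 'a \<Rightarrow> 'a \<Rightarrow> 'a set" where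
  "branch_V V E a b = {v \<in> V. (del_edge E a b)\<^sup>*\<^sup>* a v}"

definition branch_E :: "'a set \<Rightarrow> ('a \<Rightarrow> 'a \<Rightarrow> bool) \<Rightarrow> 'a \<Rightarrow> 'a \<Rightarrow> 'a \<Rightarrow> 'a \<Rightarrow> bool" where
  "branch_E V E a b u v \<longleftrightarrow> del_edge E a b u v \<and> u \<in> branch_V V E a b \<and> v \<in> branch_V V E a b"

definition two_placement :: "'a set \<Rightarrow> ('a \<Rightarrow> 'a \<Rightarrow> bool) \<Rightarrow> ('a \<Rightarrow> 'a) \<Rightarrow> bool" where
  "two_placement V E \<sigma> \<longleftrightarrow> bij_betw \<sigma> V V \<and> (\<forall>a b. E a b \<longrightarrow> \<not> E (\<sigma> a) (\<sigma> b))"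

text \<open>Every cycle of sigma has length at most 5: each vertex returns within 5 steps.\<close>
definition well_2_placement :: "'a set \<Rightarrow> ('a \<Rightarrow> 'a \<Rightarrow> bool) \<Rightarrow> 'a \<Rightarrow> ('a \<Rightarrow> 'a) \<Rightarrow> bool" where
  "well_2_placement V E x \<sigma> \<longleftrightarrow>
     bij_betw \<sigma> V V \<and> (\<forall>v\<in>V. \<sigma> v \<noteq> v) \<and>
     two_placement V E \<sigma> \<and>
     (\<forall>a b. E a b \<longrightarrow> dist E (\<sigma> a) (\<sigma> b) \<le> 6) \<and>
     dist E x (\<sigma> x) \<le> 2 \<and>
     (\<forall>w\<in>V. E x w \<longrightarrow> dist E w (\<sigma> w) \<le> 3) \<and>
     (\<forall>w\<in>V. degree V E w = 1 \<longrightarrow> dist E w (\<sigma> w) \<le> 4) \<and>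
     (\<forall>v\<in>V. \<exists>k\<in>{1..5}. (\<sigma> ^^ k) v = v)"

end

theory Submission
  imports Defs
begin

datatype code = CX | CL | CY nat | CZ nat

fun pc :: "bool \<Rightarrow> nat \<Rightarrow> code \<Rightarrow> code" where
"pc hL m CX = (if hL then CL else if even m then CZ 0 else CY 0)"
| "pc hL m CL = (if even m then CZ 0 else CY 0)"
| "pc hL m (CY i) = (if even m then (if i = 0 then (if hL then CZ 1 else CY 1) else if i = 1 then (if hL then CY 0 else CZ 1) else if even i then CY (i+1) else CZ i) else (if i=0 then CY 1 else if i=1 then CZ 1 else if i = 2 then (if hL then CZ 0 else CZ 2) else if odd i then CY (i+1) else CZ i))"
| "pc hL m (CZ i) = (if even m then (if i=0 then (if hL then CX else CY 0) else if i=1 then (if hL then CY 1 else CX) else if even i then CY i else CZ (i-1)) else (if i=0 then (if hL then CZ 2 else CY 2) else if i=1 then CX else if i=2 then (if hL then CY 2 else CZ 0) else if odd i then CY i else CZ (i-1)))"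

fun valid :: "bool \<Rightarrow> nat \<Rightarrow> code \<Rightarrow> bool" where
"valid hL m CX = True" | "valid hL m CL = hL" | "valid hL m (CY i) = (i < m)" | "valid hL m (CZ i) = (i < m)"

fun cadj :: "code \<Rightarrow> code \<Rightarrow> bool" where
"cadj CX CL = True" | "cadj CL CX = True" | "cadj CX (CY i) = True" | "cadj (CY i) CX = True"
| "cadj (CY i) (CZ j) = (i = j)" | "cadj (CZ j) (CY i) = (i = j)" | "cadj _ _ = False"

fun depth :: "code \<Rightarrow> nat" where
"depth CX = 0" | "depth CL = 1" | "depth (CY i) = 1" | "depth (CZ i) = 2"

lemma depth_le: "depth c \<le> 2" by (cases c) auto

lemma cadj_CX: "cadj CX c \<Longrightarrow> depth c = 1" by (cases c) auto

lemma pc_valid: "2 \<le> m \<Longrightarrow> valid hL m c \<Longrightarrow> valid hL m (pc hL m c)"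
  apply (cases c) apply auto apply presburger+ done

lemma pc_nofix: "valid hL m c \<Longrightarrow> pc hL m c \<noteq> c"
  by (cases c) auto

lemma pc_adj: "2 \<le> m \<Longrightarrow> valid hL m c \<Longrightarrow> valid hL m d \<Longrightarrow> cadj c d \<Longrightarrow> \<not> cadj (pc hL m c) (pc hL m d)"
  by (cases c; cases d) simp_all

lemma five_cases: "(i::nat) = 0 \<or> i = 1 \<or> i = 2 \<or> i = 3 \<or> i = 4 \<or> (\<exists>j. i = j + 5)"
proof (cases "i \<ge> 5")
  case True then show ?thesis by (auto dest!: le_Suc_ex)
next
  case False then have "i = 0 \<or> i = 1 \<or> i = 2 \<or> i = 3 \<or> i = 4" by arith
  then show ?thesis by blast
qed

lemma cyc_CY: "2 \<le> m \<Longrightarrow> c = CY i \<Longrightarrow> pc hL m (pc hL m (pc hL m c)) = c \<or> pc hL m (pc hL m (pc hL m (pc hL m c))) = c \<or> pc hL m (pc hL m (pc hL m (pc hL m (pc hL m c)))) = c"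
  using five_cases[of i] by (elim disjE exE; cases hL; cases "even m"; cases "even i"; simp)

lemma cyc_CZ: "2 \<le> m \<Longrightarrow> c = CZ i \<Longrightarrow> pc hL m (pc hL m (pc hL m c)) = c \<or> pc hL m (pc hL m (pc hL m (pc hL m c))) = c \<or> pc hL m (pc hL m (pc hL m (pc hL m (pc hL m c)))) = c"
  using five_cases[of i] by (elim disjE exE; cases hL; cases "even m"; cases "even i"; simp)

lemma cyc_CX: "2 \<le> m \<Longrightarrow> c = CX \<Longrightarrow> pc hL m (pc hL m (pc hL m c)) = c \<or> pc hL m (pc hL m (pc hL m (pc hL m c))) = c \<or> pc hL m (pc hL m (pc hL m (pc hL m (pc hL m c)))) = c"
  by (cases hL; cases "even m"; simp)

lemma cyc_CL: "2 \<le> m \<Longrightarrow> hL \<Longrightarrow> c = CL \<Longrightarrow> pc hL m (pc hL m (pc hL m c)) = c \<or> pc hL m (pc hL m (pc hL m (pc hL m c))) = c \<or> pc hL m (pc hL m (pc hL m (pc hL m (pc hL m c)))) = c"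
  by (cases "even m"; simp)

lemma pc_cyc: assumes "2 \<le> m" "valid hL m c" shows "pc hL m (pc hL m (pc hL m c)) = c \<or> pc hL m (pc hL m (pc hL m (pc hL m c))) = c \<or> pc hL m (pc hL m (pc hL m (pc hL m (pc hL m c)))) = c"
proof (cases c)
  case CX show ?thesis by (rule cyc_CX[OF assms(1) CX])
next
  case CL then have "hL" using assms(2) by simp
  then show ?thesis by (rule cyc_CL[OF assms(1) _ CL])
next
  case (CY i) show ?thesis by (rule cyc_CY[OF assms(1) CY])
next
  case (CZ i) show ?thesis by (rule cyc_CZ[OF assms(1) CZ])
qed

lemma pc_pow: "2 \<le> m \<Longrightarrow> valid hL m c \<Longrightarrow> \<exists>k\<in>{1..5}. (pc hL m ^^ k) c = c"
proof -
  assume a: "2 \<le> m" "valid hL m c"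
  have e3: "(pc hL m ^^ 3) c = pc hL m (pc hL m (pc hL m c))" by (simp add: numeral_3_eq_3 del: pc.simps)
  have e4: "(pc hL m ^^ 4) c = pc hL m (pc hL m (pc hL m (pc hL m c)))" by (simp add: eval_nat_numeral del: pc.simps)
  have e5: "(pc hL m ^^ 5) c = pc hL m (pc hL m (pc hL m (pc hL m (pc hL m c))))" by (simp add: eval_nat_numeral del: pc.simps)
  have i3: "(3::nat) \<in> {1..5}" and i4: "(4::nat) \<in> {1..5}" and i5: "(5::nat) \<in> {1..5}" by auto
  from pc_cyc[OF a] show ?thesis
  proof (elim disjE)
    assume "pc hL m (pc hL m (pc hL m c)) = c" then show ?thesis using e3 i3 by metis
  next
    assume "pc hL m (pc hL m (pc hL m (pc hL m c))) = c" then show ?thesis using e4 i4 by metis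
  next
    assume "pc hL m (pc hL m (pc hL m (pc hL m (pc hL m c)))) = c" then show ?thesis using e5 i5 by metis
  qed
qed

lemma rp_add: "(E ^^ a) u w \<Longrightarrow> (E ^^ b) w v \<Longrightarrow> (E ^^ (a + b)) u v"
proof (induction b arbitrary: v)
  case 0 then show ?case by (auto elim: relpowp_0_E)
next
  case (Suc b)
  from Suc.prems(2) obtain y where "(E ^^ b) w y" "E y v" by (auto elim: relpowp_Suc_E)
  with Suc.IH[OF Suc.prems(1)] show ?case by (metis add_Suc_right relpowp_Suc_I)
qed

lemma dist_le: "(E ^^ n) u v \<Longrightarrow> dist E u v \<le> n"
  unfolding dist_def by (rule Least_le)

theorem lemma3p9:
  fixes V :: "'a set" and E :: "'a \<Rightarrow> 'a \<Rightarrow> bool" and x :: 'a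
  assumes "non_star_tree V E"
    and "x \<in> V"
    and "degree V E x \<ge> 3"
    and "\<forall>y\<in>V. E x y \<longrightarrow>
           graph_iso (branch_V V E y x) (branch_E V E y x) (path_V 1) (path_E 1) \<or>
           graph_iso (branch_V V E y x) (branch_E V E y x) (path_V 2) (path_E 2)"
    and "card {y \<in> V. E x y \<and>
           graph_iso (branch_V V E y x) (branch_E V E y x) (path_V 1) (path_E 1)} \<le> 1"
  shows "\<exists>\<sigma>. well_2_placement V E x \<sigma>"
proof -
  have fin: "finite V" using assms(1) by (auto simp: non_star_tree_def tree_def graph_def)
  have Ein: "\<And>u v. E u v \<Longrightarrow> u \<in> V \<and> v \<in> V" and Eirr: "\<And>u v. E u v \<Longrightarrow> u \<noteq> v"
    and Esym: "\<And>u v. E u v \<Longrightarrow> E v u"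
    using assms(1) by (auto simp: non_star_tree_def tree_def graph_def)
  have conn: "\<And>v. v \<in> V \<Longrightarrow> E\<^sup>*\<^sup>* x v" using assms(1,2)
    by (auto simp: non_star_tree_def tree_def connected_graph_def)
  define N where "N = {y \<in> V. E x y}"
  define N1 where "N1 = {y \<in> V. E x y \<and> graph_iso (branch_V V E y x) (branch_E V E y x) (path_V 1) (path_E 1)}"
  define N2 where "N2 = N - N1"
  have memB: "\<And>y. y \<in> V \<Longrightarrow> y \<in> branch_V V E y x" by (simp add: branch_V_def)
  have stepB: "\<And>y u w. u \<in> branch_V V E y x \<Longrightarrow> E u w \<Longrightarrow> \<not>((u = y \<and> w = x) \<or> (u = x \<and> w = y)) \<Longrightarrow> w \<in> branch_V V E y x"
    unfolding branch_V_def using Ein by (auto intro: rtranclp.rtrancl_into_rtrancl simp: del_edge_def)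
  have finB: "\<And>y. finite (branch_V V E y x)" using fin by (simp add: branch_V_def)
  have F1: "w = x" if y: "y \<in> N1" and e: "E y w" for y w
  proof -
    from y obtain f where bf: "bij_betw f (branch_V V E y x) (path_V 1)" unfolding N1_def graph_iso_def by blast
    have "card (branch_V V E y x) = 1" using bij_betw_same_card[OF bf] by (simp add: path_V_def)
    then obtain a where Ba: "branch_V V E y x = {a}" by (auto simp: card_1_singleton_iff)
    have yV: "y \<in> V" and xy: "E x y" using y N1_def by auto
    show "w = x" proof (rule ccontr)
      assume "w \<noteq> x"
      then have "w \<in> branch_V V E y x" using stepB[OF memB[OF yV] e] Eirr[OF xy] by auto
      with Ba memB[OF yV] Eirr[OF e] show False by auto
    qed
  qed
  have F2: "\<exists>z. z \<noteq> x \<and> z \<noteq> y \<and> E y z \<and> (\<forall>w. E y w \<longrightarrow> w = x \<or> w = z) \<and> (\<forall>w. E z w \<longrightarrow> w = y)"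
    if y: "y \<in> N2" for y
  proof -
    have yV: "y \<in> V" and xy: "E x y" using y by (auto simp: N2_def N_def)
    have "graph_iso (branch_V V E y x) (branch_E V E y x) (path_V 2) (path_E 2)"
      using y assms(4) by (auto simp: N2_def N_def N1_def)
    then obtain f where bf: "bij_betw f (branch_V V E y x) (path_V 2)"
      and fe: "\<forall>u\<in>branch_V V E y x. \<forall>v\<in>branch_V V E y x. branch_E V E y x u v \<longleftrightarrow> path_E 2 (f u) (f v)"
      unfolding graph_iso_def by blast
    define B where "B = branch_V V E y x"
    have cB: "card B = 2" using bij_betw_same_card[OF bf] by (simp add: path_V_def B_def)
    then obtain p q where pq: "B = {p, q}" "p \<noteq> q" by (auto simp: card_2_iff)
    have yB: "y \<in> B" using memB[OF yV] B_def by simp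
    define z where "z = (if p = y then q else p)"
    have Byz: "B = {y, z}" and zy: "z \<noteq> y" using pq yB by (auto simp: z_def)
    define a where "a = inv_into B f 0"
    define b where "b = inv_into B f 1"
    have "0 \<in> f ` B" "1 \<in> f ` B" using bf by (auto simp: bij_betw_def path_V_def B_def)
    then have aB: "a \<in> B" and bB: "b \<in> B" and fa: "f a = 0" and fb: "f b = 1"
      by (auto simp: a_def b_def inv_into_into f_inv_into_f)
    have "branch_E V E y x a b" using fe aB bB fa fb by (simp add: B_def path_E_def)
    then have de: "E a b" "\<not> ((a = y \<and> b = x) \<or> (a = x \<and> b = y))"
      by (auto simp: branch_E_def del_edge_def)
    have ab: "a \<noteq> b" using Eirr[OF de(1)] .
    have zx: "z \<noteq> x" using aB bB ab de(2) Byz by auto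
    have Eyz: "E y z" using aB bB ab de(1) Byz Esym by auto
    have zB: "z \<in> B" using Byz by auto
    have n1: "\<forall>w. E y w \<longrightarrow> w = x \<or> w = z"
    proof (intro allI impI)
      fix w assume e: "E y w"
      show "w = x \<or> w = z"
      proof (cases "w = x")
        case False
        then have "w \<in> B" using stepB[of y y w] yB e Eirr[OF xy] by (auto simp: B_def)
        then show ?thesis using Byz Eirr[OF e] by auto
      qed simp
    qed
    have n2: "\<forall>w. E z w \<longrightarrow> w = y"
    proof (intro allI impI)
      fix w assume e: "E z w"
      have "w \<in> B" using stepB[of z y w] zB e zx zy by (auto simp: B_def)
      then show "w = y" using Byz Eirr[OF e] by auto
    qed
    show ?thesis using zx zy Eyz n1 n2 by blast
  qed
  then obtain zf where zf: "\<And>y. y \<in> N2 \<Longrightarrow> zf y \<noteq> x \<and> zf y \<noteq> y \<and> E y (zf y) \<and> (\<forall>w. E y w \<longrightarrow> w = x \<or> w = zf y) \<and> (\<forall>w. E (zf y) w \<longrightarrow> w = y)"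
    by metis
  have finN: "finite N" using fin by (simp add: N_def)
  have N1N: "N1 \<subseteq> N" by (auto simp: N1_def N_def)
  have cN: "card N \<ge> 3" using assms(3) by (simp add: degree_def N_def)
  have cN1: "card N1 \<le> 1" using assms(5) by (simp add: N1_def)
  define m where "m = card N2"
  have m2: "2 \<le> m" unfolding m_def N2_def
    using card_Diff_subset[OF finite_subset[OF N1N finN] N1N] cN cN1 by simp
  obtain h where hb: "bij_betw h {0..<m} N2" using ex_bij_betw_nat_finite[of N2] finN
    by (auto simp: m_def N2_def)
  define hL where "hL = (N1 \<noteq> {})"
  define l where "l = (SOME l. l \<in> N1)"
  have lN1: "hL \<Longrightarrow> l \<in> N1" unfolding hL_def l_def by (auto intro: someI)
  have N1l: "\<And>u. u \<in> N1 \<Longrightarrow> u = l \<and> hL"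
  proof -
    fix u assume u: "u \<in> N1"
    then have "hL" by (auto simp: hL_def)
    moreover have "\<forall>a1\<in>N1. \<forall>a2\<in>N1. a1 = a2"
      using cN1 card_le_Suc0_iff_eq[OF finite_subset[OF N1N finN]] by simp
    ultimately show "u = l \<and> hL" using u lN1 by blast
  qed
  have hN2: "\<And>i. i < m \<Longrightarrow> h i \<in> N2" using hb by (auto simp: bij_betw_def)
  have hinj: "\<And>i j. i < m \<Longrightarrow> j < m \<Longrightarrow> h i = h j \<Longrightarrow> i = j"
    using hb by (auto simp: bij_betw_def inj_on_def)
  have hsurj: "\<And>y. y \<in> N2 \<Longrightarrow> \<exists>i<m. y = h i" using hb
    by (auto simp: bij_betw_def image_iff)
  have N2V: "\<And>y. y \<in> N2 \<Longrightarrow> y \<in> V \<and> E x y \<and> y \<notin> N1" by (auto simp: N2_def N_def)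
  have N1V: "\<And>y. y \<in> N1 \<Longrightarrow> y \<in> V \<and> E x y" by (auto simp: N1_def)
  have zfnb: "\<And>y w. y \<in> N2 \<Longrightarrow> E x w \<Longrightarrow> zf y \<noteq> w"
  proof
    fix y w assume y: "y \<in> N2" and xw: "E x w" and eq: "zf y = w"
    have "E (zf y) x" using Esym[OF xw] eq by simp
    then have "x = y" using zf[OF y] by blast
    then show False using Eirr N2V[OF y] by blast
  qed
  define enc where "enc = (\<lambda>c. case c of CX \<Rightarrow> x | CL \<Rightarrow> l | CY i \<Rightarrow> h i | CZ i \<Rightarrow> zf (h i))"
  define C where "C = {c. valid hL m c}"
  have zV: "\<And>i. i < m \<Longrightarrow> zf (h i) \<in> V" using zf hN2 Ein by blast
  have encV: "enc c \<in> V" if "c \<in> C" for c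
    using that lN1 N1V hN2 N2V zV assms(2)
    by (cases c) (auto simp: enc_def C_def)
  have inj: "inj_on enc C"
  proof (rule inj_onI)
    fix c d assume c: "c \<in> C" and d: "d \<in> C" and eq: "enc c = enc d"
    have xl: "hL \<Longrightarrow> x \<noteq> l" using lN1 N1V Eirr by blast
    have d2: "\<And>i. i < m \<Longrightarrow> h i \<noteq> x" using hN2 N2V Eirr by blast
    have d3: "\<And>i. i < m \<Longrightarrow> zf (h i) \<noteq> x" using hN2 zf by blast
    have d4: "\<And>i. hL \<Longrightarrow> i < m \<Longrightarrow> h i \<noteq> l" using hN2 N2V lN1 by metis
    have d5: "\<And>i. hL \<Longrightarrow> i < m \<Longrightarrow> zf (h i) \<noteq> l" using hN2 zfnb lN1 N1V by metis
    have d6: "\<And>i j. i < m \<Longrightarrow> j < m \<Longrightarrow> zf (h i) \<noteq> h j" using hN2 zfnb N2V by metis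
    have d8: "\<And>i j. i < m \<Longrightarrow> j < m \<Longrightarrow> zf (h i) = zf (h j) \<Longrightarrow> i = j"
    proof -
      fix i j assume ij: "i < m" "j < m" and e: "zf (h i) = zf (h j)"
      have "E (zf (h i)) (h j)" using zf[OF hN2[OF ij(2)]] e Esym by metis
      then have "h j = h i" using zf[OF hN2[OF ij(1)]] by blast
      then show "i = j" using hinj ij by metis
    qed
    show "c = d" using c d eq xl d2 d3 d4 d5 d6 d8 hinj
      by (cases c; cases d) (auto simp: enc_def C_def dest: sym)
  qed
  have nb: "\<exists>c'. c' \<in> C \<and> cadj c c' \<and> w = enc c'" if c: "c \<in> C" and e: "E (enc c) w" for c w
  proof (cases c)
    case CX
    then have xw: "E x w" using e by (simp add: enc_def)
    then have wN: "w \<in> N" using Ein by (auto simp: N_def)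
    show ?thesis
    proof (cases "w \<in> N1")
      case True
      then show ?thesis using N1l[OF True] CX by (auto simp: C_def enc_def intro!: exI[of _ CL])
    next
      case False
      then have "w \<in> N2" using wN by (simp add: N2_def)
      then obtain i where "i < m" "w = h i" using hsurj by blast
      then show ?thesis using CX by (auto simp: C_def enc_def intro!: exI[of _ "CY i"])
    qed
  next
    case CL
    then have "hL" using c by (simp add: C_def)
    then have "w = x" using F1[OF lN1] e CL by (simp add: enc_def)
    then show ?thesis using CL by (auto simp: C_def enc_def intro!: exI[of _ CX])
  next
    case (CY i)
    then have i: "i < m" using c by (simp add: C_def)
    have "w = x \<or> w = zf (h i)" using zf[OF hN2[OF i]] e CY by (simp add: enc_def)
    then show ?thesis
    proof
      assume "w = x" then show ?thesis using CY by (auto simp: C_def enc_def intro!: exI[of _ CX])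
    next
      assume "w = zf (h i)" then show ?thesis using CY i by (auto simp: C_def enc_def intro!: exI[of _ "CZ i"])
    qed
  next
    case (CZ i)
    then have i: "i < m" using c by (simp add: C_def)
    have "w = h i" using zf[OF hN2[OF i]] e CZ by (simp add: enc_def)
    then show ?thesis using CZ i by (auto simp: C_def enc_def intro!: exI[of _ "CY i"])
  qed
  have fwd: "cadj c d" if cd: "c \<in> C" "d \<in> C" "E (enc c) (enc d)" for c d
  proof -
    obtain c' where "c' \<in> C" "cadj c c'" "enc d = enc c'" using nb[OF cd(1,3)] by blast
    then have "d = c'" using inj cd(2) by (auto dest: inj_onD)
    then show ?thesis using \<open>cadj c c'\<close> by simp
  qed
  have xC: "CX \<in> C" by (simp add: C_def)
  have imV: "enc ` C = V"
  proof
    show "enc ` C \<subseteq> V" using encV by auto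
    show "V \<subseteq> enc ` C"
    proof
      fix v assume "v \<in> V"
      then have "E\<^sup>*\<^sup>* x v" by (rule conn)
      then show "v \<in> enc ` C"
      proof (induction rule: rtranclp_induct)
        case base then show ?case using xC by (auto simp: enc_def intro!: image_eqI[of _ _ CX])
      next
        case (step u w)
        then obtain c where "c \<in> C" "u = enc c" by auto
        then show ?case using nb[of c w] step(2) by auto
      qed
    qed
  qed
  have encb: "bij_betw enc C V" using inj imV by (simp add: bij_betw_def)
  have finC: "finite C" using finite_imageD[of enc C] imV fin inj by simp
  define p where "p = pc hL m"
  have pC: "\<And>c. c \<in> C \<Longrightarrow> p c \<in> C" using pc_valid[OF m2] by (simp add: C_def p_def)
  have pimg: "p ` C = C"
  proof
    show "p ` C \<subseteq> C" using pC by auto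
    show "C \<subseteq> p ` C"
    proof
      fix c assume c: "c \<in> C"
      have "c = p (p (p c)) \<or> c = p (p (p (p c))) \<or> c = p (p (p (p (p c))))"
        using pc_cyc[OF m2, of hL c] c by (auto simp: C_def p_def)
      then show "c \<in> p ` C" using pC c by blast
    qed
  qed
  have pb: "bij_betw p C C"
    using pimg eq_card_imp_inj_on[OF finC, of p] by (simp add: bij_betw_def)
  define sg where "sg = (\<lambda>v. enc (p (inv_into C enc v)))"
  have sg_enc: "\<And>c. c \<in> C \<Longrightarrow> sg (enc c) = enc (p c)" using inj by (simp add: sg_def)
  have sgb: "bij_betw sg V V"
  proof -
    have "bij_betw (enc \<circ> (p \<circ> inv_into C enc)) V V"
      by (rule bij_betw_trans[OF bij_betw_trans[OF bij_betw_inv_into[OF encb] pb] encb])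
    moreover have "enc \<circ> (p \<circ> inv_into C enc) = sg" by (simp add: sg_def fun_eq_iff)
    ultimately show ?thesis by simp
  qed
  have Vcode: "\<And>v. v \<in> V \<Longrightarrow> \<exists>c\<in>C. v = enc c" using imV by auto
  have powC: "\<And>k c. c \<in> C \<Longrightarrow> (p ^^ k) c \<in> C"
  proof -
    fix k c assume "c \<in> C" then show "(p ^^ k) c \<in> C" by (induction k) (auto intro: pC)
  qed
  have sgpow: "\<And>k c. c \<in> C \<Longrightarrow> (sg ^^ k) (enc c) = enc ((p ^^ k) c)"
  proof -
    fix k c assume c: "c \<in> C" then show "(sg ^^ k) (enc c) = enc ((p ^^ k) c)"
      by (induction k) (auto simp: sg_enc powC)
  qed
  have toX: "(E ^^ depth c) (enc c) x" if "c \<in> C" for c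
  proof (cases c)
    case CX then show ?thesis by (simp add: enc_def)
  next
    case CL then show ?thesis using that lN1 N1V Esym by (auto simp: enc_def C_def)
  next
    case (CY i) then show ?thesis using that hN2 N2V Esym by (auto simp: enc_def C_def)
  next
    case (CZ i)
    then have i: "i < m" using that by (simp add: C_def)
    have "E (zf (h i)) (h i)" using zf[OF hN2[OF i]] Esym by blast
    moreover have "E (h i) x" using hN2[OF i] N2V Esym by blast
    ultimately have "(E ^^ Suc (Suc 0)) (zf (h i)) x" by (meson relpowp_Suc_I2 relpowp_0_I)
    then show ?thesis using CZ by (simp add: enc_def numeral_2_eq_2)
  qed
  have fromX: "(E ^^ depth c) x (enc c)" if "c \<in> C" for c
  proof (cases c)
    case CX then show ?thesis by (simp add: enc_def)
  next
    case CL then show ?thesis using that lN1 N1V by (auto simp: enc_def C_def)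
  next
    case (CY i) then show ?thesis using that hN2 N2V by (auto simp: enc_def C_def)
  next
    case (CZ i)
    then have i: "i < m" using that by (simp add: C_def)
    have "E (h i) (zf (h i))" using zf[OF hN2[OF i]] by blast
    moreover have "E x (h i)" using hN2[OF i] N2V by blast
    ultimately have "(E ^^ Suc (Suc 0)) x (zf (h i))" by (meson relpowp_Suc_I2 relpowp_0_I)
    then show ?thesis using CZ by (simp add: enc_def numeral_2_eq_2)
  qed
  have dst: "dist E (enc c) (enc d) \<le> depth c + depth d" if "c \<in> C" "d \<in> C" for c d
    by (rule dist_le, rule rp_add[OF toX[OF that(1)] fromX[OF that(2)]])
  have dst4: "dist E (enc c) (enc d) \<le> 2 + depth d" if "c \<in> C" "d \<in> C" for c d
    using dst[OF that] depth_le[of c] by simp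
  have "well_2_placement V E x sg"
    unfolding well_2_placement_def two_placement_def
  proof (intro conjI allI impI ballI)
    show "bij_betw sg V V" by (rule sgb)
    show "bij_betw sg V V" by (rule sgb)
  next
    fix v assume "v \<in> V"
    then obtain c where c: "c \<in> C" "v = enc c" using Vcode by blast
    have "p c \<noteq> c" using pc_nofix c by (simp add: C_def p_def)
    then show "sg v \<noteq> v" using c sg_enc pC inj by (auto dest: inj_onD)
  next
    fix a b assume e: "E a b"
    obtain c where c: "c \<in> C" "a = enc c" using Vcode Ein[OF e] by blast
    obtain d where d: "d \<in> C" "b = enc d" using Vcode Ein[OF e] by blast
    have cd: "cadj c d" using fwd c d e by simp
    have "\<not> cadj (p c) (p d)" using pc_adj[OF m2] cd c d by (simp add: C_def p_def)
    then show "\<not> E (sg a) (sg b)" using fwd[OF pC[OF c(1)] pC[OF d(1)]] c d sg_enc by auto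
  next
    fix a b assume e: "E a b"
    obtain c where c: "c \<in> C" "a = enc c" using Vcode Ein[OF e] by blast
    obtain d where d: "d \<in> C" "b = enc d" using Vcode Ein[OF e] by blast
    show "dist E (sg a) (sg b) \<le> 6" using dst4[OF pC[OF c(1)] pC[OF d(1)]] depth_le[of "p d"] c d sg_enc
      by simp
  next
    have "dist E (enc CX) (enc (p CX)) \<le> depth CX + depth (p CX)" using dst xC pC by blast
    then show "dist E x (sg x) \<le> 2" using sg_enc[OF xC] depth_le[of "p CX"] by (simp add: enc_def)
  next
    fix w assume w: "w \<in> V" "E x w"
    obtain c where c: "c \<in> C" "w = enc c" using Vcode w by blast
    have "cadj CX c" using fwd[OF xC c(1)] w c by (simp add: enc_def)
    then have "depth c = 1" by (rule cadj_CX)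
    then show "dist E w (sg w) \<le> 3" using dst[OF c(1) pC[OF c(1)]] depth_le[of "p c"] c sg_enc by simp
  next
    fix w assume w: "w \<in> V" "degree V E w = 1"
    obtain c where c: "c \<in> C" "w = enc c" using Vcode w by blast
    show "dist E w (sg w) \<le> 4" using dst4[OF c(1) pC[OF c(1)]] depth_le[of "p c"] c sg_enc by simp
  next
    fix v assume "v \<in> V"
    then obtain c where c: "c \<in> C" "v = enc c" using Vcode by blast
    obtain k where "k \<in> {1..5}" "(pc hL m ^^ k) c = c" using pc_pow[OF m2, of hL c] c by (auto simp: C_def)
    then have "(sg ^^ k) v = v" using sgpow c by (simp add: p_def)
    then show "\<exists>k\<in>{1..5}. (sg ^^ k) v = v" using \<open>k \<in> {1..5}\<close> by blast
  qed
  then show ?thesis by blast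
qed

end
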